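(* Let $N\ge1$, $1\le S\le N$, $L$ a band-width vector, $\dot W$ a real symmetric $N\times N$ matrix, $k\in\mathbb Z$, $\beta\in\mathbb R^S$, $\varepsilon>0$, $W_\varepsilon=\mathrm{Id}+\varepsilon\dot W$, $D_\beta=D_{k,\beta,L}$ and $P_{\varepsilon,\beta}=D_\beta W_\varepsilon$. If $f,g\in\mathbb C^N$ and $\lambda\in\mathbb C$ satisfy $P_{\varepsilon,\beta}f=\lambda f$ and $P_{\varepsilon,\beta}g=\lambda g+f$, then $\langle f,D_\beta\overline f\rangle=0$.
   Context: A band-width vector is $L=(L_1,\dots,L_S)$ of positive integers with $\sum_sL_s=N$; $N_0=0$, $N_s=N_{s-1}+L_s$, $B_s=\{j:N_{s-1}<j\le N_s\}$. $D_{k,\beta,L}$ is the $N\times N$ diagonal matrix whose $j$-th diagonal entry is $e^{-2\pi ik\beta_s}$ for $j\in B_s$. $\overline f$ denotes the entrywise complex conjugate and $\langle v,w\rangle=\sum_{j=1}^Nv_j\overline{w_j}$. *)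

theory Defs
  imports "HOL-Analysis.Analysis" "Jordan_Normal_Form.Matrix" "Jordan_Normal_Form.Conjugate"
begin

definition band_width_vector :: "nat \<Rightarrow> nat \<Rightarrow> (nat \<Rightarrow> nat) \<Rightarrow> bool" where
  "band_width_vector N S L \<longleftrightarrow> (\<forall>s\<in>{1..S}. 0 < L s) \<and> (\<Sum>s=1..S. L s) = N"

definition Nsum :: "(nat \<Rightarrow> nat) \<Rightarrow> nat \<Rightarrow> nat" where
  "Nsum L s = (\<Sum>t=1..s. L t)"

definition block :: "(nat \<Rightarrow> nat) \<Rightarrow> nat \<Rightarrow> nat set" where
  "block L s = {j. Nsum L (s - 1) < j \<and> j \<le> Nsum L s}"

definition block_of :: "nat \<Rightarrow> (nat \<Rightarrow> nat) \<Rightarrow> nat \<Rightarrow> nat" where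
  "block_of S L j = (THE s. s \<in> {1..S} \<and> j \<in> block L s)"

text \<open>D_{k,beta,L}: N x N diagonal matrix whose j-th diagonal entry (1-based j) is
  exp(-2 pi i k beta_s) for j in B_s. JNF matrices are 0-based, so row i corresponds to j = i+1.\<close>
definition D_mat :: "nat \<Rightarrow> nat \<Rightarrow> int \<Rightarrow> (nat \<Rightarrow> real) \<Rightarrow> (nat \<Rightarrow> nat) \<Rightarrow> complex mat" where
  "D_mat N S k \<beta> L = mat N N (\<lambda>(i, j). if i = j
      then exp (- 2 * complex_of_real pi * \<i> * of_int k * complex_of_real (\<beta> (block_of S L (i + 1))))
      else 0)"

end

theory Submission
  imports Defs
begin

theorem lemma3p5:
  fixes N S :: nat and L :: "nat \<Rightarrow> nat" and Wdot :: "real mat" and k :: int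
    and \<beta> :: "nat \<Rightarrow> real" and \<epsilon> :: real and f g :: "complex vec" and lam :: complex
  assumes "N \<ge> 1" and "1 \<le> S" and "S \<le> N"
    and "band_width_vector N S L"
    and "Wdot \<in> carrier_mat N N" and "transpose_mat Wdot = Wdot"
    and "\<epsilon> > 0"
    and "f \<in> carrier_vec N" and "g \<in> carrier_vec N"
    and "(D_mat N S k \<beta> L * map_mat complex_of_real (1\<^sub>m N + \<epsilon> \<cdot>\<^sub>m Wdot)) *\<^sub>v f = lam \<cdot>\<^sub>v f"
    and "(D_mat N S k \<beta> L * map_mat complex_of_real (1\<^sub>m N + \<epsilon> \<cdot>\<^sub>m Wdot)) *\<^sub>v g = lam \<cdot>\<^sub>v g + f"
  shows "f \<bullet>c (D_mat N S k \<beta> L *\<^sub>v conjugate f) = 0"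
proof -
  define D where "D = D_mat N S k \<beta> L"
  define M where "M = map_mat complex_of_real (1\<^sub>m N + \<epsilon> \<cdot>\<^sub>m Wdot)"
  define dd where "dd i = exp (- 2 * complex_of_real pi * \<i> * of_int k * complex_of_real (\<beta> (block_of S L (i + 1))))" for i
  have fc: "f \<in> carrier_vec N" and gc: "g \<in> carrier_vec N" using assms by auto
  have Dc: "D \<in> carrier_mat N N" unfolding D_def D_mat_def by auto
  have Mc: "M \<in> carrier_mat N N" unfolding M_def using assms(5) by auto
  have Dij: "D $$ (i,j) = (if i = j then dd i else 0)" if "i < N" "j < N" for i j
    using that unfolding D_def D_mat_def dd_def by auto
  have ddc: "cnj (dd i) * dd i = 1" for i
  proof -
    have "cnj (dd i) = exp (- (- 2 * complex_of_real pi * \<i> * of_int k * complex_of_real (\<beta> (block_of S L (i + 1)))))"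
      unfolding dd_def exp_cnj by simp
    thus ?thesis unfolding dd_def by (simp add: exp_minus field_simps)
  qed
  have Msym: "M $$ (i,j) = M $$ (j,i)" if "i < N" "j < N" for i j
  proof -
    have "Wdot $$ (i,j) = Wdot $$ (j,i)"
      using assms(5,6) that by (metis carrier_matD(1,2) index_transpose_mat(1))
    thus ?thesis unfolding M_def using that assms(5) by auto
  qed
  have Dv: "(D *\<^sub>v y) $ i = dd i * y $ i" if "i < N" "y \<in> carrier_vec N" for i y
  proof -
    have "(D *\<^sub>v y) $ i = (\<Sum>j\<in>{0..<N}. D $$ (i,j) * y $ j)"
      using that Dc by (auto simp: mult_mat_vec_def scalar_prod_def)
    also have "\<dots> = (\<Sum>j\<in>{0..<N}. (if j = i then dd i * y $ i else 0))"
      by (rule sum.cong) (use that Dij in auto)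
    also have "\<dots> = dd i * y $ i" using that by simp
    finally show ?thesis .
  qed
  have DMv: "((D * M) *\<^sub>v y) $ i = dd i * (M *\<^sub>v y) $ i" if "i < N" "y \<in> carrier_vec N" for i y
  proof -
    have "(D * M) *\<^sub>v y = D *\<^sub>v (M *\<^sub>v y)" using that Dc Mc by (simp add: assoc_mult_mat_vec)
    thus ?thesis using Dv[of i "M *\<^sub>v y"] that Mc by simp
  qed
  have Mv: "(M *\<^sub>v y) $ i = (\<Sum>j<N. M $$ (i,j) * y $ j)" if "i < N" "y \<in> carrier_vec N" for i y
    using that Mc by (auto simp: mult_mat_vec_def scalar_prod_def lessThan_atLeast0)
  have hf: "(M *\<^sub>v f) $ i = cnj (dd i) * lam * f $ i" if "i < N" for i
  proof -
    have "dd i * (M *\<^sub>v f) $ i = lam * f $ i"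
      using assms(10) DMv[OF that fc] that fc unfolding D_def M_def by (metis carrier_vecD index_smult_vec(1))
    hence "cnj (dd i) * (dd i * (M *\<^sub>v f) $ i) = cnj (dd i) * lam * f $ i" by simp
    thus ?thesis using ddc[of i] by (simp add: mult.assoc[symmetric])
  qed
  have hg: "(M *\<^sub>v g) $ i = cnj (dd i) * (lam * g $ i + f $ i)" if "i < N" for i
  proof -
    have "dd i * (M *\<^sub>v g) $ i = lam * g $ i + f $ i"
      using assms(11) DMv[OF that gc] that fc gc unfolding D_def M_def
      by (metis carrier_vecD index_add_vec(1) index_smult_vec(1) index_smult_vec(2))
    hence "cnj (dd i) * (dd i * (M *\<^sub>v g) $ i) = cnj (dd i) * (lam * g $ i + f $ i)" by simp
    thus ?thesis using ddc[of i] by (simp add: mult.assoc[symmetric])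
  qed
  have sym: "(\<Sum>i<N. g $ i * (M *\<^sub>v f) $ i) = (\<Sum>i<N. f $ i * (M *\<^sub>v g) $ i)"
  proof -
    have "(\<Sum>i<N. g $ i * (M *\<^sub>v f) $ i) = (\<Sum>i<N. \<Sum>j<N. g $ i * M $$ (i,j) * f $ j)"
      using Mv[OF _ fc] by (simp add: sum_distrib_left mult.assoc)
    also have "\<dots> = (\<Sum>j<N. \<Sum>i<N. g $ i * M $$ (i,j) * f $ j)" by (rule sum.swap)
    also have "\<dots> = (\<Sum>j<N. \<Sum>i<N. f $ j * M $$ (j,i) * g $ i)"
      by (intro sum.cong refl) (simp add: Msym mult.commute mult.left_commute)
    also have "\<dots> = (\<Sum>i<N. f $ i * (M *\<^sub>v g) $ i)"
      using Mv[OF _ gc] by (simp add: sum_distrib_left mult.assoc)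
    finally show ?thesis .
  qed
  have "(\<Sum>i<N. g $ i * (cnj (dd i) * lam * f $ i)) = (\<Sum>i<N. f $ i * (cnj (dd i) * (lam * g $ i + f $ i)))" (is ?E)
    using sym hf hg by simp
  hence "(\<Sum>i<N. g $ i * (cnj (dd i) * lam * f $ i)) = (\<Sum>i<N. g $ i * (cnj (dd i) * lam * f $ i)) + (\<Sum>i<N. cnj (dd i) * f $ i * f $ i)"
  proof -
    assume h: ?E
    have "(\<Sum>i<N. f $ i * (cnj (dd i) * (lam * g $ i + f $ i))) = (\<Sum>i<N. g $ i * (cnj (dd i) * lam * f $ i) + cnj (dd i) * f $ i * f $ i)"
      by (rule sum.cong) (simp_all add: algebra_simps)
    also have "\<dots> = (\<Sum>i<N. g $ i * (cnj (dd i) * lam * f $ i)) + (\<Sum>i<N. cnj (dd i) * f $ i * f $ i)"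
      by (rule sum.distrib)
    finally show ?thesis using h by simp
  qed
  hence z: "(\<Sum>i<N. cnj (dd i) * f $ i * f $ i) = 0" by simp
  have "f \<bullet>c (D *\<^sub>v conjugate f) = (\<Sum>i<N. f $ i * cnj ((D *\<^sub>v conjugate f) $ i))"
    using fc Dc by (simp add: scalar_prod_def lessThan_atLeast0)
  also have "\<dots> = (\<Sum>i<N. cnj (dd i) * f $ i * f $ i)"
    by (rule sum.cong) (use fc Dv in auto)
  finally show ?thesis using z unfolding D_def by simp
qed

end
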